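(* For a positive integer $d$ let $p(d)=\frac{3}{16}(d-1)d^2\prod_{q\mid d}\bigl(1-\frac{1}{q^2}\bigr)$ (product over prime divisors $q$ of $d$), and for $n\ge1$ let $a_n=\sum_{d\mid n}\sigma_1\bigl(\frac{n}{d}\bigr)p(d)$. Then for every $n\geq1$, \[ a_n=\frac{3}{16}\bigl[\sigma_3(n)-n\sigma_1(n)\bigr]. \]
   Context: $\sigma_\ell(m)=\sum_{d\mid m}d^\ell$ for positive integers $m$. (For odd $n$, $p(n)$ is the number of primitive type A square-tiled surfaces with $n$ squares in $\mathcal{H}(2)$ and $a_n$ the number of all type A ones; for even $n$ the quantities are defined by these formulas.) *)

theory Defs
  imports Complex_Main "HOL-Computational_Algebra.Primes"
begin

definition sigma :: "nat \<Rightarrow> nat \<Rightarrow> nat" where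
  "sigma l m = (\<Sum>d | d dvd m. d ^ l)"

definition pcount :: "nat \<Rightarrow> real" where
  "pcount d = 3/16 * (real d - 1) * (real d)^2 *
     (\<Prod>q\<in>prime_factors d. (1 - 1 / (real q)^2))"

definition acount :: "nat \<Rightarrow> real" where
  "acount n = (\<Sum>d | d dvd n. real (sigma 1 (n div d)) * pcount d)"

end

theory Submission
  imports Defs
begin

definition J2 :: "nat \<Rightarrow> real" where
  "J2 d = (real d)^2 * (\<Prod>q\<in>prime_factors d. (1 - 1 / (real q)^2))"

lemma fin_div: "(n::nat) > 0 \<Longrightarrow> finite {d. d dvd n}"
  by (simp add: finite_divisors_nat)

lemma J2_mult:
  assumes "coprime a b" "a > 0" "b > 0"
  shows "J2 (a*b) = J2 a * J2 b"
proof -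
  have pf: "prime_factors (a*b) = prime_factors a \<union> prime_factors b"
    using assms by (simp add: prime_factors_product)
  have disj: "prime_factors a \<inter> prime_factors b = {}"
  proof (rule ccontr)
    assume "prime_factors a \<inter> prime_factors b \<noteq> {}"
    then obtain q where q: "q \<in> prime_factors a" "q \<in> prime_factors b" by blast
    then have "prime q" "q dvd a" "q dvd b" by auto
    then show False using assms(1)
      by (metis coprime_common_divisor_nat not_prime_1)
  qed
  show ?thesis unfolding J2_def pf
    by (subst prod.union_disjoint[OF _ _ disj]) (auto simp: power_mult_distrib)
qed

lemma J2_prime_power:
  assumes "prime p" "i > 0"
  shows "J2 (p^i) = (real p)^(2*i) * (1 - 1/(real p)^2)"
proof -
  have "prime_factors (p^i) = {p}"
    using assms by (simp add: prime_factorization_prime_power)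
  moreover have "(real (p^i))^2 = (real p)^(2*i)"
    by (simp add: power_mult[symmetric] mult.commute)
  ultimately show ?thesis unfolding J2_def by simp
qed

lemma divsum_coprime:
  fixes f :: "nat \<Rightarrow> real"
  assumes "coprime a b" "a > 0" "b > 0"
  shows "(\<Sum>d | d dvd a*b. f d) = (\<Sum>x | x dvd a. \<Sum>y | y dvd b. f (x*y))"
proof -
  have "(\<Sum>x | x dvd a. \<Sum>y | y dvd b. f (x*y)) = (\<Sum>(x,y)\<in>{x. x dvd a} \<times> {y. y dvd b}. f (x*y))"
    by (subst sum.cartesian_product) simp
  also have "\<dots> = (\<Sum>d\<in>(\<lambda>(x,y). x*y) ` ({x. x dvd a} \<times> {y. y dvd b}). f d)"
  proof (subst sum.reindex)
    show "inj_on (\<lambda>(x, y). x * y) ({x. x dvd a} \<times> {y. y dvd b})"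
    proof (rule inj_onI, clarify)
      fix x y x' y' assume h: "x dvd a" "y dvd b" "x' dvd a" "y' dvd b" "x*y = x'*y'"
      have c1: "coprime x y'" using assms(1) h(1,4) coprime_imp_coprime dvd_trans by (meson coprime_divisors)
      have c2: "coprime x' y" using assms(1) h(2,3) by (meson coprime_divisors)
      have "x dvd x'*y'" using h(5) by (metis dvd_triv_left)
      then have "x dvd x'" using c1 coprime_dvd_mult_left_iff by blast
      moreover have "x' dvd x*y" using h(5) by (metis dvd_triv_left)
      then have "x' dvd x" using c2 coprime_dvd_mult_left_iff by blast
      ultimately have "x = x'" by (simp add: dvd_antisym)
      moreover have "x > 0" using h(1) assms(2) by (metis dvd_0_left_iff gr0I not_gr0)
      ultimately show "x = x' \<and> y = y'" using h(5) by simp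
    qed
  qed (simp add: case_prod_beta)
  also have "(\<lambda>(x,y). x*y) ` ({x. x dvd a} \<times> {y. y dvd b}) = {d. d dvd a*b}"
  proof (rule set_eqI, rule iffI)
    fix d assume "d \<in> (\<lambda>(x,y). x*y) ` ({x. x dvd a} \<times> {y. y dvd b})"
    then show "d \<in> {d. d dvd a*b}" by (auto intro: mult_dvd_mono)
  next
    fix d assume "d \<in> {d. d dvd a*b}"
    then obtain x y where "d = x*y" "x dvd a" "y dvd b" using division_decomp by (metis mem_Collect_eq)
    then show "d \<in> (\<lambda>(x,y). x*y) ` ({x. x dvd a} \<times> {y. y dvd b})" by auto
  qed
  finally show ?thesis by simp
qed

lemma J2_pp_sum:
  assumes "prime p"
  shows "(\<Sum>d | d dvd p^k. J2 d) = (real p)^(2*k)"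
proof -
  have set: "{d. d dvd p^k} = (\<lambda>i. p^i) ` {..k}"
    using divides_primepow_nat[OF assms] by auto
  have inj: "inj_on (\<lambda>i. p^i) {..k}"
    using prime_gt_1_nat[OF assms] by (simp add: inj_on_def)
  have "(\<Sum>i\<le>k. J2 (p^i)) = (real p)^(2*k)"
  proof (induction k)
    case 0 then show ?case by (simp add: J2_def)
  next
    case (Suc k)
    have pp: "(real p)^2 \<noteq> 0" using assms by (simp add: prime_gt_0_nat)
    have "(\<Sum>i\<le>Suc k. J2 (p^i)) = (real p)^(2*k) + (real p)^(2*Suc k) * (1 - 1/(real p)^2)"
      using Suc J2_prime_power[OF assms, of "Suc k"] by simp
    also have "\<dots> = (real p)^(2*Suc k)"
      using pp by (simp add: field_simps power_add power2_eq_square)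
    finally show ?case .
  qed
  then show ?thesis unfolding set by (simp add: sum.reindex[OF inj])
qed

lemma J2_sum: "m > 0 \<Longrightarrow> (\<Sum>d | d dvd m. J2 d) = (real m)^2"
proof (induction m rule: less_induct)
  case (less m)
  show ?case
  proof (cases "m = 1")
    case True then show ?thesis by (simp add: J2_def)
  next
    case False
    then obtain p where p: "prime p" "p dvd m" using less.prems prime_factor_nat by blast
    define k where "k = multiplicity p m"
    define r where "r = m div p^k"
    have r2: "\<not> p dvd r" unfolding r_def k_def
      by (rule multiplicity_decompose) (use less.prems p(1) not_prime_unit in auto)
    have "p^k dvd m" unfolding k_def by (rule multiplicity_dvd)
    then have r1: "m = p ^ k * r" unfolding r_def by simp
    note r = r1 r2
    have k: "k > 0" using p less.prems unfolding k_def
      by (simp add: prime_multiplicity_gt_zero_iff)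
    have rpos: "r > 0" using r less.prems by (cases "r = 0") auto
    have pk: "p^k > 0" using p(1) by (simp add: prime_gt_0_nat)
    have cop: "coprime (p^k) r" using r(2) p(1)
      by (simp add: prime_imp_coprime)
    have "p \<le> p^k" using k p(1) by (cases k) (auto simp: prime_gt_0_nat Suc_le_eq)
    then have "2 \<le> p^k" using prime_ge_2_nat[OF p(1)] by linarith
    then have "r*2 \<le> r*p^k" by simp
    then have "r < m" using rpos by (subst r(1)) (simp add: mult.commute)
    have "(\<Sum>d | d dvd m. J2 d) = (\<Sum>x | x dvd p^k. \<Sum>y | y dvd r. J2 (x*y))"
      by (subst r(1)) (rule divsum_coprime[OF cop pk rpos])
    also have "\<dots> = (\<Sum>x | x dvd p^k. \<Sum>y | y dvd r. J2 x * J2 y)"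
    proof (intro sum.cong refl)
      fix x y assume "x \<in> {x. x dvd p^k}" "y \<in> {y. y dvd r}"
      then have "x dvd p^k" "y dvd r" by auto
      moreover have "coprime x y" using cop calculation by (meson coprime_divisors)
      moreover have "x > 0" using calculation(1) pk by (cases "x = 0") auto
      moreover have "y > 0" using calculation(2) rpos by (cases "y = 0") auto
      ultimately show "J2 (x*y) = J2 x * J2 y" using J2_mult by blast
    qed
    also have "\<dots> = (\<Sum>x | x dvd p^k. J2 x) * (\<Sum>y | y dvd r. J2 y)"
      by (simp add: sum_product)
    also have "\<dots> = (real p)^(2*k) * (real r)^2"
      using J2_pp_sum[OF p(1)] less.IH[OF \<open>r < m\<close> rpos] by simp
    also have "\<dots> = (real m)^2"
      by (subst r(1)) (simp add: power_mult_distrib power_mult mult.commute)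
    finally show ?thesis .
  qed
qed


lemma sigma_real: "real (sigma l m) = (\<Sum>d | d dvd m. real d ^ l)"
  by (simp add: sigma_def)

lemma pcount_J2: "pcount d = 3/16 * (real d - 1) * J2 d"
  by (simp add: pcount_def J2_def)

lemma toP:
  fixes F :: "nat \<Rightarrow> nat \<Rightarrow> real"
  assumes n: "n > 0"
  shows "(\<Sum>d | d dvd n. \<Sum>e | e dvd n div d. F d e) = (\<Sum>(d,e)\<in>{(d,e). d*e dvd n}. F d e)"
proof -
  have fin: "finite {d. d dvd n}" using n by (simp add: finite_divisors_nat)
  have fin2: "\<forall>d\<in>{d. d dvd n}. finite {e. e dvd n div d}"
  proof
    fix d assume "d \<in> {d. d dvd n}"
    then have "n div d > 0" using n by (auto simp: dvd_div_eq_0_iff)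
    then show "finite {e. e dvd n div d}" by (simp add: finite_divisors_nat)
  qed
  have "(\<Sum>d | d dvd n. \<Sum>e | e dvd n div d. F d e) =
        (\<Sum>(d,e)\<in>Sigma {d. d dvd n} (\<lambda>d. {e. e dvd n div d}). F d e)"
    using sum.Sigma[OF fin fin2] by simp
  also have "Sigma {d. d dvd n} (\<lambda>d. {e. e dvd n div d}) = {(d,e). d*e dvd n}"
  proof (rule set_eqI, clarify)
    fix d e
    show "((d,e) \<in> Sigma {d. d dvd n} (\<lambda>d. {e. e dvd n div d})) = ((d,e) \<in> {(d,e). d*e dvd n})"
    proof (cases "d = 0")
      case True then show ?thesis using n by auto
    next
      case False
      then show ?thesis
        by (auto simp: dvd_div_iff_mult mult.commute dvd_mult_left)
    qed
  qed
  finally show ?thesis .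
qed

lemma swap_div:
  fixes F :: "nat \<Rightarrow> nat \<Rightarrow> real"
  assumes n: "n > 0"
  shows "(\<Sum>d | d dvd n. \<Sum>e | e dvd n div d. F d e) = (\<Sum>e | e dvd n. \<Sum>d | d dvd n div e. F d e)"
proof -
  have "(\<Sum>e | e dvd n. \<Sum>d | d dvd n div e. F d e) = (\<Sum>(e,d)\<in>{(e,d). e*d dvd n}. F d e)"
    using toP[OF n, of "\<lambda>e d. F d e"] by simp
  also have "\<dots> = (\<Sum>(d,e)\<in>{(d,e). d*e dvd n}. F d e)"
    by (rule sum.reindex_bij_witness[of _ prod.swap prod.swap]) (auto simp: mult.commute)
  finally show ?thesis using toP[OF n, of F] by simp
qed

lemma regroup:
  fixes F :: "nat \<Rightarrow> nat \<Rightarrow> real"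
  assumes n: "n > 0"
  shows "(\<Sum>d | d dvd n. \<Sum>e | e dvd n div d. F d e) = (\<Sum>k | k dvd n. \<Sum>d | d dvd k. F d (k div d))"
proof -
  have fin: "finite {k. k dvd n}" using n by (simp add: finite_divisors_nat)
  have fin2: "\<forall>k\<in>{k. k dvd n}. finite {d. d dvd k}"
  proof
    fix k assume "k \<in> {k. k dvd n}"
    then have "k > 0" using n by (cases "k = 0") auto
    then show "finite {d. d dvd k}" by (simp add: finite_divisors_nat)
  qed
  have "(\<Sum>k | k dvd n. \<Sum>d | d dvd k. F d (k div d)) =
        (\<Sum>(k,d)\<in>Sigma {k. k dvd n} (\<lambda>k. {d. d dvd k}). F d (k div d))"
    using sum.Sigma[OF fin fin2] by simp
  also have "\<dots> = (\<Sum>(d,e)\<in>{(d,e). d*e dvd n}. F d e)"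
  proof (rule sum.reindex_bij_witness[of _ "\<lambda>(d,e). (d*e, d)" "\<lambda>(k,d). (d, k div d)"])
    fix a assume "a \<in> {(d,e). d*e dvd n}"
    then obtain d e where a: "a = (d,e)" "d*e dvd n" by blast
    then have "d \<noteq> 0" using n by (cases "d = 0") auto
    then show "(case (case a of (d, e) \<Rightarrow> (d * e, d)) of (k, d) \<Rightarrow> (d, k div d)) = a" using a by simp
    show "(case a of (d, e) \<Rightarrow> (d * e, d)) \<in> Sigma {k. k dvd n} (\<lambda>k. {d. d dvd k})" using a by auto
  next
    fix b assume "b \<in> Sigma {k. k dvd n} (\<lambda>k. {d. d dvd k})"
    then obtain k d where b: "b = (k,d)" "k dvd n" "d dvd k" by blast
    then show "(case (case b of (k, d) \<Rightarrow> (d, k div d)) of (d, e) \<Rightarrow> (d * e, d)) = b" by simp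
    show "(case b of (k, d) \<Rightarrow> (d, k div d)) \<in> {(d,e). d*e dvd n}" using b by simp
    show "(case case b of (k, d) \<Rightarrow> (d, k div d) of (d, e) \<Rightarrow> F d e) = (case b of (k, d) \<Rightarrow> F d (k div d))"
      using b by simp
  qed
  finally show ?thesis using toP[OF n, of F] by simp
qed

lemma div_sum_flip:
  fixes n :: nat
  assumes n: "n > 0"
  shows "(\<Sum>e | e dvd n. real (n div e)) = (\<Sum>e | e dvd n. real e)"
  by (rule sum.reindex_bij_witness[of _ "\<lambda>e. n div e" "\<lambda>e. n div e"])
     (use n in \<open>auto simp: dvd_div_eq_mult div_div_eq_right dvd_mult_div_cancel\<close>)

theorem mainTheorem6:
  fixes n :: nat
  assumes "n \<ge> 1"
  shows "acount n = 3/16 * (real (sigma 3 n) - real n * real (sigma 1 n))"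
proof -
  have n: "n > 0" using assms by simp
  have dpos: "\<And>d. d dvd n \<Longrightarrow> d > 0" using n by (metis dvd_0_left_iff gr0I less_not_refl)
  have acount_eq: "acount n = 3/16 * ((\<Sum>d | d dvd n. real (sigma 1 (n div d)) * real d * J2 d)
                          - (\<Sum>d | d dvd n. real (sigma 1 (n div d)) * J2 d))"
    unfolding acount_def pcount_J2 sum_distrib_left sum_subtractf[symmetric]
    by (intro sum.cong refl) (simp add: field_simps)
  have T1: "(\<Sum>d | d dvd n. real (sigma 1 (n div d)) * real d * J2 d) = real (sigma 3 n)"
  proof -
    have "(\<Sum>d | d dvd n. real (sigma 1 (n div d)) * real d * J2 d)
        = (\<Sum>d | d dvd n. \<Sum>e | e dvd n div d. real e * real d * J2 d)"
      by (simp add: sigma_real sum_distrib_right)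
    also have "\<dots> = (\<Sum>k | k dvd n. \<Sum>d | d dvd k. real (k div d) * real d * J2 d)"
      by (rule regroup[OF n])
    also have "\<dots> = (\<Sum>k | k dvd n. real k * (\<Sum>d | d dvd k. J2 d))"
    proof (intro sum.cong refl)
      fix k assume "k \<in> {k. k dvd n}"
      show "(\<Sum>d | d dvd k. real (k div d) * real d * J2 d) = real k * (\<Sum>d | d dvd k. J2 d)"
        unfolding sum_distrib_left
      proof (intro sum.cong refl)
        fix d assume "d \<in> {d. d dvd k}"
        then have "real (k div d) * real d = real k" by (simp flip: of_nat_mult)
        then show "real (k div d) * real d * J2 d = real k * J2 d" by simp
      qed
    qed
    also have "\<dots> = (\<Sum>k | k dvd n. real k ^ 3)"
    proof (intro sum.cong refl)
      fix k assume "k \<in> {k. k dvd n}"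
      then have "k > 0" using dpos by blast
      then show "real k * (\<Sum>d | d dvd k. J2 d) = real k ^ 3" by (simp add: J2_sum power3_eq_cube power2_eq_square)
    qed
    finally show ?thesis by (simp add: sigma_real)
  qed
  have T2: "(\<Sum>d | d dvd n. real (sigma 1 (n div d)) * J2 d) = real n * real (sigma 1 n)"
  proof -
    have "(\<Sum>d | d dvd n. real (sigma 1 (n div d)) * J2 d)
        = (\<Sum>d | d dvd n. \<Sum>e | e dvd n div d. real e * J2 d)"
      by (simp add: sigma_real sum_distrib_right)
    also have "\<dots> = (\<Sum>e | e dvd n. \<Sum>d | d dvd n div e. real e * J2 d)"
      by (rule swap_div[OF n])
    also have "\<dots> = (\<Sum>e | e dvd n. real n * real (n div e))"
    proof (intro sum.cong refl)
      fix e assume "e \<in> {e. e dvd n}"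
      then have e: "e dvd n" "e > 0" using dpos by auto
      then have q: "n div e > 0" using n by (auto elim!: dvdE)
      have ne: "real n = real e * real (n div e)" using e by (simp flip: of_nat_mult)
      show "(\<Sum>d | d dvd n div e. real e * J2 d) = real n * real (n div e)"
        by (simp add: sum_distrib_left[symmetric] J2_sum[OF q] ne power2_eq_square)
    qed
    also have "\<dots> = real n * real (sigma 1 n)"
      by (simp add: sum_distrib_left[symmetric] div_sum_flip[OF n] sigma_real)
    finally show ?thesis .
  qed
  show ?thesis using acount_eq T1 T2 by simp
qed

end
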